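(* Let $\Gamma$ be an inhomogeneous $Y$-semigroup such that $Y_1 \subseteq \mathcal{D}(A_\Gamma)$ and $\Gamma$ is $Y$-strongly $t$-continuous. Assume also that $A_\Gamma(t) \in \mathcal{B}(Y_1,Y)$ for all $t \in J$ and that for all $(s,t) \in \Delta_J$ the map $u \mapsto \|A_\Gamma(u)\|_{\mathcal{B}(Y_1,Y)}$ belongs to $L^1([s,t])$. Then for all $f \in Y_1$ and $(s,t) \in \Delta_J$, \[ \Gamma(s,t)f-f=\int_s^t \Gamma(s,u) A_\Gamma(u) f\,du \] (Bochner integral in $Y$).
   Context: Let $(Y,\|\cdot\|)$ be a real separable Banach space and $(Y_1,\|\cdot\|_{Y_1})$ a real separable Banach space continuously embedded in $Y$. $\mathcal B(Y)$, $\mathcal B(Y_1,Y)$ denote bounded linear operators. $J$ is either $\mathbb{R}^+$ or $[0,T_\infty]$ ($T_\infty>0$), $\Delta_J=\{(s,t)\in J^2:s\le t\}$, $J(s)=\{t\in J:t\ge s\}$. An inhomogeneous $Y$-semigroup is a map $\Gamma:\Delta_J\to\mathcal B(Y)$ with $\Gamma(t,t)=I$ and $\Gamma(s,r)\Gamma(r,t)=\Gamma(s,t)$ for $s\le r\le t$ in $J$. Generator: for $t\in J$, $\mathcal D(A_\Gamma(t))$ is the set of $f\in Y$ such that $\lim_{h\downarrow0,\,t+h\in J}h^{-1}(\Gamma(t,t+h)-I)f$ and $\lim_{h\downarrow0,\,t-h\in J}h^{-1}(\Gamma(t-h,t)-I)f$ exist in $Y$ and are equal, $A_\Gamma(t)f$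 denoting the common value; $\mathcal D(A_\Gamma)=\bigcap_{t\in J}\mathcal D(A_\Gamma(t))$. $\Gamma$ is $Y$-strongly $t$-continuous if for every $f\in Y$, $s\in J$, $u\mapsto\Gamma(s,u)f$ is continuous from $J(s)$ into $(Y,\|\cdot\|)$. *)

theory Defs
  imports "HOL-Analysis.Analysis"
begin

definition admissible_J :: "real set \<Rightarrow> bool" where
  "admissible_J J \<longleftrightarrow> J = {0..} \<or> (\<exists>T>0. J = {0..T})"

text \<open>Inhomogeneous Y-semigroup on Delta_J (values outside Delta_J are irrelevant).\<close>
definition inhom_semigroup :: "real set \<Rightarrow> (real \<Rightarrow> real \<Rightarrow> 'y::real_normed_vector \<Rightarrow>\<^sub>L 'y) \<Rightarrow> bool" where
  "inhom_semigroup J \<Gamma> \<longleftrightarrow>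
     (\<forall>t\<in>J. \<Gamma> t t = id_blinfun) \<and>
     (\<forall>s\<in>J. \<forall>r\<in>J. \<forall>t\<in>J. s \<le> r \<and> r \<le> t \<longrightarrow> \<Gamma> s r o\<^sub>L \<Gamma> r t = \<Gamma> s t)"

definition gen_limit :: "real set \<Rightarrow> (real \<Rightarrow> real \<Rightarrow> 'y::real_normed_vector \<Rightarrow>\<^sub>L 'y) \<Rightarrow> real \<Rightarrow> 'y \<Rightarrow> 'y \<Rightarrow> bool" where
  "gen_limit J \<Gamma> t f L \<longleftrightarrow>
     ((\<lambda>h. (1 / h) *\<^sub>R (blinfun_apply (\<Gamma> t (t + h)) f - f)) \<longlongrightarrow> L) (at 0 within {h. 0 < h \<and> t + h \<in> J}) \<and>
     ((\<lambda>h. (1 / h) *\<^sub>R (blinfun_apply (\<Gamma> (t - h) t) f - f)) \<longlongrightarrow> L) (at 0 within {h. 0 < h \<and> t - h \<in> J})"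

definition gen_dom :: "real set \<Rightarrow> (real \<Rightarrow> real \<Rightarrow> 'y::real_normed_vector \<Rightarrow>\<^sub>L 'y) \<Rightarrow> real \<Rightarrow> 'y set" where
  "gen_dom J \<Gamma> t = {f. \<exists>L. gen_limit J \<Gamma> t f L}"

text \<open>Generator A_Gamma(t) f (meaningful for f in gen_dom J Gamma t).\<close>
definition gen :: "real set \<Rightarrow> (real \<Rightarrow> real \<Rightarrow> 'y::real_normed_vector \<Rightarrow>\<^sub>L 'y) \<Rightarrow> real \<Rightarrow> 'y \<Rightarrow> 'y" where
  "gen J \<Gamma> t f = (SOME L. gen_limit J \<Gamma> t f L)"

definition gen_dom_all :: "real set \<Rightarrow> (real \<Rightarrow> real \<Rightarrow> 'y::real_normed_vector \<Rightarrow>\<^sub>L 'y) \<Rightarrow> 'y set" where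
  "gen_dom_all J \<Gamma> = (\<Inter>t\<in>J. gen_dom J \<Gamma> t)"

definition strongly_t_continuous :: "real set \<Rightarrow> (real \<Rightarrow> real \<Rightarrow> 'y::real_normed_vector \<Rightarrow>\<^sub>L 'y) \<Rightarrow> bool" where
  "strongly_t_continuous J \<Gamma> \<longleftrightarrow>
     (\<forall>f. \<forall>s\<in>J. continuous_on {u\<in>J. s \<le> u} (\<lambda>u. blinfun_apply (\<Gamma> s u) f))"

end

theory Submission imports Defs "HOL-Analysis.Analysis" begin
lemma simple_HK:
  fixes s :: "real \<Rightarrow> 'b::{banach,second_countable_topology}"
  assumes "simple_function lborel s" "emeasure lborel {y \<in> space lborel. s y \<noteq> 0} \<noteq> \<infinity>"
  shows "(s has_integral integral\<^sup>L lborel s) UNIV"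
  using assms
proof (induct rule: integrable_simple_function_induct)
  case (cong f g)
  have "f = g" using cong by auto
  then show ?case using cong by simp
next
  case (indicator A y)
  have int: "integrable lborel (indicator A :: real \<Rightarrow> real)"
    using indicator by (intro integrable_real_indicator) auto
  then have "(indicator A has_integral integral\<^sup>L lborel (indicator A :: real \<Rightarrow> real)) UNIV"
    by (rule has_integral_integral_lborel)
  then have "((\<lambda>x. indicator A x *\<^sub>R y) has_integral (integral\<^sup>L lborel (indicator A :: real \<Rightarrow> real)) *\<^sub>R y) UNIV"
    by (rule has_integral_scaleR_left)
  moreover have "integral\<^sup>L lborel (\<lambda>x. indicator A x *\<^sub>R y) = integral\<^sup>L lborel (indicator A :: real \<Rightarrow> real) *\<^sub>R y"
    by (rule integral_scaleR_left) (use int in auto)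
  ultimately show ?case by (simp only:)
next
  case (add f g)
  have "integrable lborel f" "integrable lborel g"
    using add by (auto intro: integrable_simple_function)
  then have "integral\<^sup>L lborel (\<lambda>x. f x + g x) = integral\<^sup>L lborel f + integral\<^sup>L lborel g"
    by (rule Bochner_Integration.integral_add)
  moreover have "((\<lambda>x. f x + g x) has_integral (integral\<^sup>L lborel f + integral\<^sup>L lborel g)) UNIV"
    using add.hyps(6,7) by (rule has_integral_add)
  ultimately show ?case by (simp only:)
qed

lemma HK_eq_bochner:
  fixes f :: "real \<Rightarrow> 'b::{banach,second_countable_topology}"
  assumes f: "integrable lborel f" and I: "(f has_integral I) UNIV"
  shows "I = integral\<^sup>L lborel f"
proof -
  obtain s where s1: "\<And>i. simple_function lborel (s i)"
      and s2: "\<And>i. emeasure lborel {y \<in> space lborel. s i y \<noteq> 0} \<noteq> \<infinity>"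
      and s3: "\<And>x. x \<in> space lborel \<Longrightarrow> (\<lambda>i. s i x) \<longlonglongrightarrow> f x"
      and s4: "\<And>x i. x \<in> space lborel \<Longrightarrow> norm (s i x) \<le> 2 * norm (f x)"
    using integrable_implies_simple_function_sequence[OF f] by blast
  have sint: "integrable lborel (s i)" for i using s1 s2 by (rule integrable_simple_function)
  have sHK: "(s i has_integral integral\<^sup>L lborel (s i)) UNIV" for i using s1 s2 by (rule simple_HK)
  have fm: "f \<in> borel_measurable lborel" using f by (rule borel_measurable_integrable)
  have B: "(\<lambda>i. integral\<^sup>L lborel (s i)) \<longlonglongrightarrow> integral\<^sup>L lborel f"
  proof (rule integral_dominated_convergence[where w="\<lambda>x. 2 * norm (f x)"])
    show "AE x in lborel. (\<lambda>i. s i x) \<longlonglongrightarrow> f x" using s3 by simp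
    show "AE x in lborel. norm (s i x) \<le> 2 * norm (f x)" for i using s4 by simp
  qed (use f fm sint in simp_all)
  have C: "(\<lambda>i. integral\<^sup>L lborel (\<lambda>x. norm (f x - s i x))) \<longlonglongrightarrow> integral\<^sup>L lborel (\<lambda>x::real. 0::real)"
  proof (rule integral_dominated_convergence[where w="\<lambda>x. 3 * norm (f x)" and f="\<lambda>x. 0" and s="\<lambda>i x. norm (f x - s i x)"])
    show "(\<lambda>x. norm (f x - s i x)) \<in> borel_measurable lborel" for i
      using borel_measurable_integrable[OF sint[of i]] fm by measurable
    show "AE x in lborel. (\<lambda>i. norm (f x - s i x)) \<longlonglongrightarrow> 0"
    proof (rule AE_I2)
      fix x :: real
      have "(\<lambda>i. f x - s i x) \<longlonglongrightarrow> f x - f x" using s3[of x] by (intro tendsto_diff tendsto_const) simp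
      then show "(\<lambda>i. norm (f x - s i x)) \<longlonglongrightarrow> 0"
        using tendsto_norm_zero[of "\<lambda>i. f x - s i x"] by simp
    qed
    show "AE x in lborel. norm (norm (f x - s i x)) \<le> 3 * norm (f x)" for i
    proof (rule AE_I2)
      fix x :: real
      have "norm (f x - s i x) \<le> norm (f x) + norm (s i x)" by (rule norm_triangle_ineq4)
      then show "norm (norm (f x - s i x)) \<le> 3 * norm (f x)" using s4[of x i] by simp
    qed
  qed (simp, intro integrable_mult_right integrable_norm f)
  have D: "norm (I - integral\<^sup>L lborel (s i)) \<le> integral\<^sup>L lborel (\<lambda>x. norm (f x - s i x))" for i
  proof -
    have h1: "((\<lambda>x. f x - s i x) has_integral (I - integral\<^sup>L lborel (s i))) UNIV"
      using I sHK[of i] by (rule has_integral_diff)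
    have gi: "integrable lborel (\<lambda>x. norm (f x - s i x))" by (intro integrable_norm Bochner_Integration.integrable_diff f sint)
    have h2: "((\<lambda>x. norm (f x - s i x)) has_integral integral\<^sup>L lborel (\<lambda>x. norm (f x - s i x))) UNIV"
      using gi by (rule has_integral_integral_lborel)
    have "norm (integral UNIV (\<lambda>x. f x - s i x)) \<le> integral UNIV (\<lambda>x. norm (f x - s i x))"
      by (rule integral_norm_bound_integral) (use h1 h2 in \<open>auto simp: integrable_on_def\<close>)
    then show ?thesis using h1 h2 by (simp add: integral_unique)
  qed
  have E: "(\<lambda>i. norm (I - integral\<^sup>L lborel (s i))) \<longlonglongrightarrow> norm (I - integral\<^sup>L lborel f)"
    by (intro tendsto_norm tendsto_diff tendsto_const B)
  have "norm (I - integral\<^sup>L lborel f) \<le> 0"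
  proof (rule LIMSEQ_le[OF E])
    show "\<exists>N. \<forall>n\<ge>N. norm (I - integral\<^sup>L lborel (s n)) \<le> integral\<^sup>L lborel (\<lambda>x. norm (f x - s n x))"
      using D by blast
  qed (use C in simp)
  then show ?thesis by simp
qed

lemma UBP:
  fixes T :: "'i \<Rightarrow> 'a::banach \<Rightarrow>\<^sub>L 'b::real_normed_vector"
  assumes bnd: "\<And>x. \<exists>B. \<forall>i\<in>K. norm (T i x) \<le> B"
  shows "\<exists>M. \<forall>i\<in>K. norm (T i) \<le> M"
proof -
  define E where "E n = {x. \<forall>i\<in>K. norm (T i x) \<le> real n}" for n :: nat
  have clE: "closed (E n)" for n
  proof -
    have "E n = (\<Inter>i\<in>K. {x. norm (T i x) \<le> real n})" unfolding E_def by auto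
    moreover have "closed {x. norm (T i x) \<le> real n}" for i
      by (intro closed_Collect_le continuous_intros)
    ultimately show ?thesis by auto
  qed
  have UE: "(\<Union>n. E n) = UNIV"
  proof safe
    fix x :: 'a
    obtain B where B: "\<forall>i\<in>K. norm (T i x) \<le> B" using bnd by blast
    obtain n :: nat where "B \<le> real n" using real_arch_simple by blast
    then have "x \<in> E n" using B unfolding E_def by force
    then show "x \<in> (\<Union>n. E n)" by blast
  qed auto
  have "\<exists>n. interior (E n) \<noteq> {}"
  proof (rule ccontr)
    assume "\<not> ?thesis"
    then have *: "\<And>T. T \<in> range E \<Longrightarrow> closedin euclidean T \<and> euclidean interior_of T = {}"
      using clE by (auto simp: closed_closedin[symmetric] euclidean_interior_of)
    have "euclidean interior_of \<Union>(range E) = {}"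
      by (rule Baire_category_alt[OF _ _ *]) (auto simp: completely_metrizable_space_euclidean)
    then show False using UE by (simp add: euclidean_interior_of)
  qed
  then obtain n x0 where "x0 \<in> interior (E n)" by blast
  then obtain r where r: "r > 0" "ball x0 r \<subseteq> E n"
    using open_contains_ball by (metis interior_subset open_interior subset_trans)
  have x0E: "x0 \<in> E n" using r by auto
  show ?thesis
  proof (intro exI ballI)
    fix i assume i: "i \<in> K"
    show "norm (T i) \<le> 4 * real n / r"
    proof (rule norm_blinfun_bound)
      show "0 \<le> 4 * real n / r" using r by simp
      fix x :: 'a
      show "norm (T i x) \<le> 4 * real n / r * norm x"
      proof (cases "x = 0")
        case True then show ?thesis by simp
      next
        case False
        define c where "c = r / (2 * norm x)"
        have c: "c > 0" using r False unfolding c_def by simp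
        have "norm (c *\<^sub>R x) = r / 2" using False r unfolding c_def by simp
        then have "x0 + c *\<^sub>R x \<in> ball x0 r" using r by (simp add: dist_norm)
        then have "x0 + c *\<^sub>R x \<in> E n" using r by auto
        then have a: "norm (T i (x0 + c *\<^sub>R x)) \<le> real n" using i unfolding E_def by auto
        have b: "norm (T i x0) \<le> real n" using x0E i unfolding E_def by auto
        have "c * norm (T i x) = norm (T i (x0 + c *\<^sub>R x) - T i x0)"
          using c by (simp add: blinfun.add_right blinfun.scaleR_right)
        also have "\<dots> \<le> 2 * real n" using a b norm_triangle_ineq4[of "T i (x0 + c *\<^sub>R x)" "T i x0"] by simp
        finally have "c * norm (T i x) \<le> 2 * real n" .
        then have "norm (T i x) \<le> 2 * real n / c" using c by (simp add: field_simps)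
        also have "\<dots> = 4 * real n / r * norm x" using False r unfolding c_def by (simp add: field_simps)
        finally show ?thesis .
      qed
    qed
  qed
qed

lemma quot_imp_vd:
  fixes F :: "real \<Rightarrow> 'b::real_normed_vector"
  assumes Q: "((\<lambda>y. (1/(y-x)) *\<^sub>R (F y - F x)) \<longlongrightarrow> D) (at x within S)"
  shows "(F has_vector_derivative D) (at x within S)"
  unfolding has_vector_derivative_def has_derivative_within
proof (intro conjI)
  show "bounded_linear (\<lambda>h. h *\<^sub>R D)" by (rule bounded_linear_scaleR_left)
  have "((\<lambda>y. norm ((1/(y-x)) *\<^sub>R (F y - F x) - D)) \<longlongrightarrow> 0) (at x within S)"
    using Q by (intro tendsto_norm_zero LIM_zero)
  moreover have "\<forall>\<^sub>F y in at x within S. norm ((1/(y-x)) *\<^sub>R (F y - F x) - D)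
      = norm ((1 / norm (y - x)) *\<^sub>R (F y - (F x + (y - x) *\<^sub>R D)))"
  proof (rule eventually_at_filter[THEN iffD2], rule always_eventually, intro allI impI)
    fix y assume "y \<noteq> x"
    then have ne: "y - x \<noteq> 0" by simp
    have e1: "(1/(y-x)) *\<^sub>R (F y - (F x + (y - x) *\<^sub>R D)) = (1/(y-x)) *\<^sub>R (F y - F x) - ((1/(y-x)) * (y-x)) *\<^sub>R D"
      by (simp only: diff_diff_eq[symmetric] scaleR_diff_right scaleR_scaleR)
    have "(1/(y-x)) *\<^sub>R (F y - F x) - D = (1/(y-x)) *\<^sub>R (F y - (F x + (y - x) *\<^sub>R D))"
      unfolding e1 using ne by simp
    then have "norm ((1/(y-x)) *\<^sub>R (F y - F x) - D) = \<bar>1/(y-x)\<bar> * norm (F y - (F x + (y - x) *\<^sub>R D))"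
      by simp
    also have "\<dots> = norm ((1 / norm (y - x)) *\<^sub>R (F y - (F x + (y - x) *\<^sub>R D)))"
      by simp
    finally show "norm ((1/(y-x)) *\<^sub>R (F y - F x) - D)
      = norm ((1 / norm (y - x)) *\<^sub>R (F y - (F x + (y - x) *\<^sub>R D)))" .
  qed
  ultimately have "((\<lambda>y. norm ((1 / norm (y - x)) *\<^sub>R (F y - (F x + (y - x) *\<^sub>R D)))) \<longlongrightarrow> 0) (at x within S)"
    using tendsto_cong by fastforce
  then show "((\<lambda>y. (1 / norm (y - x)) *\<^sub>R (F y - (F x + (y - x) *\<^sub>R D))) \<longlongrightarrow> 0) (at x within S)"
    by (rule tendsto_norm_zero_cancel)
qed

theorem theorem2p8:
  fixes J :: "real set"
    and \<Gamma> :: "real \<Rightarrow> real \<Rightarrow> ('y::{banach, second_countable_topology} \<Rightarrow>\<^sub>L 'y)"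
    and \<iota> :: "'z::{banach, second_countable_topology} \<Rightarrow> 'y"
  assumes J: "admissible_J J"
    and emb: "bounded_linear \<iota>" "inj \<iota>"
    and semi: "inhom_semigroup J \<Gamma>"
    and dom: "range \<iota> \<subseteq> gen_dom_all J \<Gamma>"
    and cont: "strongly_t_continuous J \<Gamma>"
    and bdd: "\<And>t. t \<in> J \<Longrightarrow> bounded_linear (\<lambda>g. gen J \<Gamma> t (\<iota> g))"
    and L1: "\<And>s t. s \<in> J \<Longrightarrow> t \<in> J \<Longrightarrow> s \<le> t \<Longrightarrow>
               set_integrable lborel {s..t} (\<lambda>u. onorm (\<lambda>g. gen J \<Gamma> u (\<iota> g)))"
  shows "\<forall>g s t. s \<in> J \<longrightarrow> t \<in> J \<longrightarrow> s \<le> t \<longrightarrow>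
           set_integrable lborel {s..t} (\<lambda>u. blinfun_apply (\<Gamma> s u) (gen J \<Gamma> u (\<iota> g))) \<and>
           blinfun_apply (\<Gamma> s t) (\<iota> g) - \<iota> g
             = (LINT u:{s..t}|lborel. blinfun_apply (\<Gamma> s u) (gen J \<Gamma> u (\<iota> g)))"
proof (intro allI impI)
  fix g s t assume sJ: "s \<in> J" and tJ: "t \<in> J" and st: "s \<le> t"
  define f where "f = \<iota> g"
  define A where "A u = gen J \<Gamma> u f" for u
  define F where "F v = blinfun_apply (\<Gamma> s v) f" for v
  define D where "D u = blinfun_apply (\<Gamma> s u) (A u)" for u
  have Jint: "b \<in> J" if "a \<in> J" "c \<in> J" "a \<le> b" "b \<le> c" for a b c
    using J that unfolding admissible_J_def by auto
  have sub: "{s..t} \<subseteq> J" using Jint[OF sJ tJ] by auto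
  have comp: "blinfun_apply (\<Gamma> a b) (blinfun_apply (\<Gamma> b c) x) = blinfun_apply (\<Gamma> a c) x"
    if "a \<in> J" "b \<in> J" "c \<in> J" "a \<le> b" "b \<le> c" for a b c x
  proof -
    have "\<Gamma> a b o\<^sub>L \<Gamma> b c = \<Gamma> a c" using semi that unfolding inhom_semigroup_def by blast
    then show ?thesis by (metis blinfun_apply_blinfun_compose)
  qed
  have Fs: "F s = f" using semi sJ unfolding inhom_semigroup_def F_def by simp
  have genlim: "gen_limit J \<Gamma> u f (A u)" if "u \<in> J" for u
  proof -
    have "f \<in> gen_dom J \<Gamma> u" using dom that unfolding f_def gen_dom_all_def by auto
    then have "\<exists>L. gen_limit J \<Gamma> u f L" unfolding gen_dom_def by auto
    then show ?thesis unfolding A_def gen_def by (rule someI_ex)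
  qed
  have contx: "continuous_on {s..t} (\<lambda>u. blinfun_apply (\<Gamma> s u) x)" for x
  proof -
    have "continuous_on {u\<in>J. s \<le> u} (\<lambda>u. blinfun_apply (\<Gamma> s u) x)"
      using cont sJ unfolding strongly_t_continuous_def by blast
    moreover have "{s..t} \<subseteq> {u\<in>J. s \<le> u}" using sub by auto
    ultimately show ?thesis by (rule continuous_on_subset)
  qed
  obtain M where M: "\<And>u. u \<in> {s..t} \<Longrightarrow> norm (\<Gamma> s u) \<le> M"
  proof -
    have "\<exists>B. \<forall>u\<in>{s..t}. norm (blinfun_apply (\<Gamma> s u) x) \<le> B" for x
    proof -
      have "compact ((\<lambda>u. blinfun_apply (\<Gamma> s u) x) ` {s..t})"
        by (rule compact_continuous_image[OF contx compact_Icc])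
      then have "bounded ((\<lambda>u. blinfun_apply (\<Gamma> s u) x) ` {s..t})" by (rule compact_imp_bounded)
      then show ?thesis unfolding bounded_iff by auto
    qed
    then have "\<exists>M. \<forall>u\<in>{s..t}. norm (\<Gamma> s u) \<le> M" by (rule UBP)
    then show ?thesis using that by blast
  qed
  have M0: "0 \<le> M" using M[of s] st by (meson atLeastAtMost_iff norm_ge_zero order.trans order_refl)
  have Q: "((\<lambda>y. (1/(y-u)) *\<^sub>R (F y - F u)) \<longlongrightarrow> D u) (at u within {s..t})"
    if u: "u \<in> {s..t}" for u
  proof -
    have uJ: "u \<in> J" using u sub by auto
    have R: "((\<lambda>y. (1/(y-u)) *\<^sub>R (F y - F u)) \<longlongrightarrow> D u) (at u within {u<..t})"
    proof -
      let ?H = "{h. 0 < h \<and> u + h \<in> J}"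
      have q: "((\<lambda>h. (1 / h) *\<^sub>R (blinfun_apply (\<Gamma> u (u + h)) f - f)) \<longlongrightarrow> A u) (at 0 within ?H)"
        using genlim[OF uJ] unfolding gen_limit_def by blast
      have fl: "filterlim (\<lambda>y. y - u) (at 0 within ?H) (at u within {u<..t})"
        unfolding filterlim_at
      proof
        show "\<forall>\<^sub>F y in at u within {u<..t}. y - u \<in> ?H \<and> y - u \<noteq> 0"
        proof (rule eventually_at_filter[THEN iffD2], rule always_eventually, intro allI impI)
          fix y assume "y \<noteq> u" "y \<in> {u<..t}"
          then show "y - u \<in> ?H \<and> y - u \<noteq> 0" using Jint[OF uJ tJ, of y] by auto
        qed
        have "((\<lambda>y. y - u) \<longlongrightarrow> u - u) (at u within {u<..t})"
          by (intro tendsto_intros)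
        then show "((\<lambda>y. y - u) \<longlongrightarrow> 0) (at u within {u<..t})" by simp
      qed
      have "((\<lambda>y. (1 / (y - u)) *\<^sub>R (blinfun_apply (\<Gamma> u (u + (y - u))) f - f)) \<longlongrightarrow> A u) (at u within {u<..t})"
        using filterlim_compose[OF q fl] by simp
      then have lim: "((\<lambda>y. blinfun_apply (\<Gamma> s u) ((1 / (y - u)) *\<^sub>R (blinfun_apply (\<Gamma> u (u + (y - u))) f - f))) \<longlongrightarrow> D u) (at u within {u<..t})"
        unfolding D_def by (rule bounded_linear.tendsto[OF blinfun.bounded_linear_right])
      have ev: "\<forall>\<^sub>F y in at u within {u<..t}. blinfun_apply (\<Gamma> s u) ((1 / (y - u)) *\<^sub>R (blinfun_apply (\<Gamma> u (u + (y - u))) f - f))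
               = (1/(y-u)) *\<^sub>R (F y - F u)"
      proof (rule eventually_at_filter[THEN iffD2], rule always_eventually, intro allI impI)
        fix y assume "y \<noteq> u" "y \<in> {u<..t}"
        then have yJ: "y \<in> J" "u \<le> y" using Jint[OF uJ tJ, of y] by auto
        have "F y = blinfun_apply (\<Gamma> s u) (blinfun_apply (\<Gamma> u y) f)"
          unfolding F_def using comp[OF sJ uJ yJ(1) _ yJ(2)] u by simp
        then show "blinfun_apply (\<Gamma> s u) ((1 / (y - u)) *\<^sub>R (blinfun_apply (\<Gamma> u (u + (y - u))) f - f))
               = (1/(y-u)) *\<^sub>R (F y - F u)"
          by (simp add: F_def blinfun.scaleR_right blinfun.diff_right)
      qed
      show ?thesis using tendsto_cong[OF ev] lim by simp
    qed
    have L: "((\<lambda>y. (1/(y-u)) *\<^sub>R (F y - F u)) \<longlongrightarrow> D u) (at u within {s..<u})"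
    proof -
      let ?H = "{h. 0 < h \<and> u - h \<in> J}"
      define p where "p h = (1 / h) *\<^sub>R (blinfun_apply (\<Gamma> (u - h) u) f - f)" for h
      have q: "(p \<longlongrightarrow> A u) (at 0 within ?H)"
        using genlim[OF uJ] unfolding gen_limit_def p_def by blast
      have fl: "filterlim (\<lambda>y. u - y) (at 0 within ?H) (at u within {s..<u})"
        unfolding filterlim_at
      proof
        show "\<forall>\<^sub>F y in at u within {s..<u}. u - y \<in> ?H \<and> u - y \<noteq> 0"
        proof (rule eventually_at_filter[THEN iffD2], rule always_eventually, intro allI impI)
          fix y assume "y \<noteq> u" "y \<in> {s..<u}"
          then show "u - y \<in> ?H \<and> u - y \<noteq> 0" using Jint[OF sJ uJ, of y] by auto
        qed
        have "((\<lambda>y. u - y) \<longlongrightarrow> u - u) (at u within {s..<u})"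
          by (intro tendsto_intros)
        then show "((\<lambda>y. u - y) \<longlongrightarrow> 0) (at u within {s..<u})" by simp
      qed
      have pl: "((\<lambda>y. p (u - y)) \<longlongrightarrow> A u) (at u within {s..<u})"
        using filterlim_compose[OF q fl] by simp
      have t1: "((\<lambda>y. blinfun_apply (\<Gamma> s y) (p (u - y) - A u)) \<longlongrightarrow> 0) (at u within {s..<u})"
      proof (rule Lim_null_comparison)
        show "\<forall>\<^sub>F y in at u within {s..<u}. norm (blinfun_apply (\<Gamma> s y) (p (u - y) - A u)) \<le> M * norm (p (u - y) - A u)"
        proof (rule eventually_at_filter[THEN iffD2], rule always_eventually, intro allI impI)
          fix y assume "y \<noteq> u" "y \<in> {s..<u}"
          then have "y \<in> {s..t}" using u by auto
          then have "norm (\<Gamma> s y) \<le> M" by (rule M)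
          then show "norm (blinfun_apply (\<Gamma> s y) (p (u - y) - A u)) \<le> M * norm (p (u - y) - A u)"
            by (meson mult_right_mono norm_blinfun norm_ge_zero order_trans)
        qed
        have "((\<lambda>y. norm (p (u - y) - A u)) \<longlongrightarrow> 0) (at u within {s..<u})"
          using pl by (intro tendsto_norm_zero LIM_zero)
        then show "((\<lambda>y. M * norm (p (u - y) - A u)) \<longlongrightarrow> 0) (at u within {s..<u})"
          by (rule tendsto_mult_right_zero)
      qed
      have t2: "((\<lambda>y. blinfun_apply (\<Gamma> s y) (A u)) \<longlongrightarrow> D u) (at u within {s..<u})"
      proof -
        have "((\<lambda>y. blinfun_apply (\<Gamma> s y) (A u)) \<longlongrightarrow> D u) (at u within {s..t})"
          using contx[of "A u"] u unfolding continuous_on_def D_def by blast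
        then show ?thesis by (rule tendsto_within_subset) (use u in auto)
      qed
      have lim: "((\<lambda>y. blinfun_apply (\<Gamma> s y) (p (u - y) - A u) + blinfun_apply (\<Gamma> s y) (A u)) \<longlongrightarrow> 0 + D u) (at u within {s..<u})"
        using t1 t2 by (rule tendsto_add)
      have ev: "\<forall>\<^sub>F y in at u within {s..<u}. blinfun_apply (\<Gamma> s y) (p (u - y) - A u) + blinfun_apply (\<Gamma> s y) (A u)
               = (1/(y-u)) *\<^sub>R (F y - F u)"
      proof (rule eventually_at_filter[THEN iffD2], rule always_eventually, intro allI impI)
        fix y assume "y \<noteq> u" "y \<in> {s..<u}"
        then have yJ: "y \<in> J" "s \<le> y" "y \<le> u" "y \<noteq> u" using Jint[OF sJ uJ, of y] by auto
        have "F u = blinfun_apply (\<Gamma> s y) (blinfun_apply (\<Gamma> y u) f)"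
          unfolding F_def using comp[OF sJ yJ(1) uJ yJ(2) yJ(3)] by simp
        moreover have "u - (u - y) = y" by simp
        moreover have "(1 / (u - y)) *\<^sub>R (a - b) = (1/(y-u)) *\<^sub>R (b - a)" for a b :: 'y
        proof -
          have "1/(y-u) = - (1/(u-y))" by (metis divide_minus_right minus_diff_eq)
          then show ?thesis by (simp add: scaleR_diff_right)
        qed
        ultimately show "blinfun_apply (\<Gamma> s y) (p (u - y) - A u) + blinfun_apply (\<Gamma> s y) (A u)
               = (1/(y-u)) *\<^sub>R (F y - F u)"
          by (simp add: p_def F_def blinfun.scaleR_right blinfun.diff_right blinfun.add_right)
      qed
      show ?thesis using tendsto_cong[OF ev] lim by simp
    qed
    have "((\<lambda>y. (1/(y-u)) *\<^sub>R (F y - F u)) \<longlongrightarrow> D u) (at u within ({s..<u} \<union> {u<..t}))"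
      using L R by (rule Lim_Un)
    moreover have "at u within ({s..<u} \<union> {u<..t}) = at u within {s..t}"
    proof -
      have "({s..<u} \<union> {u<..t}) - {u} = {s..t} - {u}" using u by auto
      then show ?thesis unfolding at_within_def by simp
    qed
    ultimately show ?thesis by simp
  qed
  have vd: "(F has_vector_derivative D u) (at u within {s..t})" if "u \<in> {s..t}" for u
    using Q[OF that] by (rule quot_imp_vd)
  have ftc: "(D has_integral (F t - F s)) {s..t}"
    using st vd by (rule fundamental_theorem_of_calculus)
  define G where "G v = F (max s (min t v))" for v
  have contF: "continuous_on {s..t} F" unfolding F_def by (rule contx)
  have contG: "continuous_on UNIV G"
    unfolding G_def
    by (rule continuous_on_compose2[OF contF]) (auto intro!: continuous_intros simp: st)
  define Dn where "Dn n x = real (Suc n) *\<^sub>R (G x - G (x - inverse (real (Suc n))))" for n x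
  have Dnm: "(\<lambda>x. indicator {s<..t} x *\<^sub>R Dn n x) \<in> borel_measurable lborel" for n
  proof -
    have "continuous_on UNIV (Dn n)" unfolding Dn_def
      by (intro continuous_intros continuous_on_compose2[OF contG]) auto
    then have "Dn n \<in> borel_measurable borel" by (rule borel_measurable_continuous_onI)
    then have "Dn n \<in> borel_measurable lborel" by simp
    then show ?thesis by measurable
  qed
  have Dlim: "(\<lambda>n. indicator {s<..t} x *\<^sub>R Dn n x) \<longlonglongrightarrow> indicator {s<..t} x *\<^sub>R D x" for x
  proof (cases "x \<in> {s<..t}")
    case False then show ?thesis by simp
  next
    case True
    define yn where "yn n = x - inverse (real (Suc n))" for n
    have ynl: "yn \<longlonglongrightarrow> x"
      unfolding yn_def using tendsto_diff[OF tendsto_const LIMSEQ_inverse_real_of_nat, of x] by simp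
    have evs: "eventually (\<lambda>n. s < yn n) sequentially"
      using ynl True by (intro order_tendstoD(1)) auto
    have fl: "filterlim yn (at x within {s..t}) sequentially"
      unfolding filterlim_at
    proof
      show "\<forall>\<^sub>F n in sequentially. yn n \<in> {s..t} \<and> yn n \<noteq> x"
        using evs
      proof (rule eventually_mono)
        fix n assume "s < yn n"
        moreover have "yn n < x" unfolding yn_def by simp
        ultimately show "yn n \<in> {s..t} \<and> yn n \<noteq> x" using True by auto
      qed
    qed (rule ynl)
    have "((\<lambda>n. (1/(yn n - x)) *\<^sub>R (F (yn n) - F x)) \<longlongrightarrow> D x) sequentially"
      using filterlim_compose[OF Q fl] True by auto
    moreover have "\<forall>\<^sub>F n in sequentially. (1/(yn n - x)) *\<^sub>R (F (yn n) - F x) = Dn n x"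
      using evs
    proof (rule eventually_mono)
      fix n assume "s < yn n"
      moreover have "yn n < x" unfolding yn_def by simp
      ultimately have "G (yn n) = F (yn n)" "G x = F x" using True unfolding G_def by auto
      moreover have e: "1/(yn n - x) = - real (Suc n)" unfolding yn_def by (simp add: field_simps)
      have "(1/(yn n - x)) *\<^sub>R (F (yn n) - F x) = real (Suc n) *\<^sub>R (F x - F (yn n))"
        unfolding e by (simp add: scaleR_diff_right del: of_nat_Suc)
      ultimately show "(1/(yn n - x)) *\<^sub>R (F (yn n) - F x) = Dn n x"
        unfolding Dn_def yn_def[symmetric] by simp
    qed
    ultimately have "(\<lambda>n. Dn n x) \<longlonglongrightarrow> D x" using tendsto_cong by fastforce
    then show ?thesis using True by simp
  qed
  have Dm1: "(\<lambda>x. indicator {s<..t} x *\<^sub>R D x) \<in> borel_measurable lborel"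
    by (rule borel_measurable_LIMSEQ_metric[OF Dnm Dlim])
  have Deq: "(\<lambda>x. indicator {s..t} x *\<^sub>R D x) = (\<lambda>x. indicator {s<..t} x *\<^sub>R D x + indicator {s} x *\<^sub>R D s)"
    using st by (auto simp: fun_eq_iff indicator_def)
  have Dm: "(\<lambda>x. indicator {s..t} x *\<^sub>R D x) \<in> borel_measurable lborel"
    unfolding Deq using Dm1 by measurable
  have Bint: "integrable lborel (\<lambda>x. (M * norm g) *\<^sub>R (indicator {s..t} x *\<^sub>R onorm (\<lambda>g. gen J \<Gamma> x (\<iota> g))))"
    using L1[OF sJ tJ st] unfolding set_integrable_def by (intro integrable_scaleR_right)
  have Dint: "integrable lborel (\<lambda>x. indicator {s..t} x *\<^sub>R D x)"
  proof (rule Bochner_Integration.integrable_bound[OF Bint Dm], rule AE_I2)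
    fix x :: real
    show "norm (indicator {s..t} x *\<^sub>R D x) \<le> norm ((M * norm g) *\<^sub>R (indicator {s..t} x *\<^sub>R onorm (\<lambda>g. gen J \<Gamma> x (\<iota> g))))"
    proof (cases "x \<in> {s..t}")
      case False then show ?thesis by simp
    next
      case True
      then have xJ: "x \<in> J" using sub by auto
      have on0: "0 \<le> onorm (\<lambda>g. gen J \<Gamma> x (\<iota> g))" by (rule onorm_pos_le[OF bdd[OF xJ]])
      have "norm (D x) \<le> norm (\<Gamma> s x) * norm (A x)" unfolding D_def by (rule norm_blinfun)
      also have "\<dots> \<le> M * (onorm (\<lambda>g. gen J \<Gamma> x (\<iota> g)) * norm g)"
      proof (rule mult_mono)
        show "norm (\<Gamma> s x) \<le> M" using M True by blast
        show "norm (A x) \<le> onorm (\<lambda>g. gen J \<Gamma> x (\<iota> g)) * norm g"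
          unfolding A_def f_def using onorm[OF bdd[OF xJ], of g] by simp
      qed (use M0 in auto)
      finally show ?thesis using True M0 on0 by (simp add: algebra_simps abs_mult)
    qed
  qed
  have "((\<lambda>x. indicator {s..t} x *\<^sub>R D x) has_integral (F t - F s)) UNIV"
  proof -
    have "(\<lambda>x. indicator {s..t} x *\<^sub>R D x) = (\<lambda>x. if x \<in> {s..t} then D x else 0)"
      by (auto simp: fun_eq_iff indicator_def)
    then show ?thesis using ftc has_integral_restrict_UNIV[of "{s..t}" D] by simp
  qed
  then have "F t - F s = integral\<^sup>L lborel (\<lambda>x. indicator {s..t} x *\<^sub>R D x)"
    by (rule HK_eq_bochner[OF Dint])
  then show "set_integrable lborel {s..t} (\<lambda>u. blinfun_apply (\<Gamma> s u) (gen J \<Gamma> u (\<iota> g))) \<and>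
           blinfun_apply (\<Gamma> s t) (\<iota> g) - \<iota> g
             = (LINT u:{s..t}|lborel. blinfun_apply (\<Gamma> s u) (gen J \<Gamma> u (\<iota> g)))"
    using Dint Fs unfolding set_integrable_def set_lebesgue_integral_def D_def A_def F_def f_def
    by simp
qed

end
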